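(* For every integer $k \ge 4$ there exist positive constants $c_k$ and $d_k$ such that for every positive integer $n$, \[ c_k\cdot 2^{n/(k-1)} \le f(n,k) \le d_k \cdot 2^{n/\lceil k/2\rceil}. \]
   Context: A family $\mathcal{F}$ of subsets of $[n]=\{1,\ldots,n\}$ is $k$-wise intersecting if every collection of at most $k$ members of $\mathcal{F}$ has a common element; it is maximal $k$-wise intersecting if moreover no subset of $[n]$ outside $\mathcal{F}$ can be added while preserving this property. $f(n,k)$ denotes the smallest possible size of a maximal $k$-wise intersecting family of subsets of $[n]$. *)

theory Defs
  imports Complex_Main
begin

definition kwise_intersecting :: "nat \<Rightarrow> nat \<Rightarrow> nat set set \<Rightarrow> bool" where
  "kwise_intersecting n k F \<longleftrightarrow>
     F \<subseteq> Pow {1..n} \<and>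
     (\<forall>G. G \<subseteq> F \<longrightarrow> G \<noteq> {} \<longrightarrow> card G \<le> k \<longrightarrow> \<Inter>G \<noteq> {})"

definition maximal_kwise_intersecting :: "nat \<Rightarrow> nat \<Rightarrow> nat set set \<Rightarrow> bool" where
  "maximal_kwise_intersecting n k F \<longleftrightarrow>
     kwise_intersecting n k F \<and>
     (\<forall>A. A \<subseteq> {1..n} \<longrightarrow> A \<notin> F \<longrightarrow> \<not> kwise_intersecting n k (insert A F))"

definition f :: "nat \<Rightarrow> nat \<Rightarrow> nat" where
  "f n k = Inf {card F | F. maximal_kwise_intersecting n k F}"

end

theory Submission
  imports Defs "HOL-Library.FuncSet"
begin

lemma maxk_finite:
  assumes "maximal_kwise_intersecting n k F" shows "finite F" "F \<subseteq> Pow {1..n}"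
  using assms unfolding maximal_kwise_intersecting_def kwise_intersecting_def
  by (auto intro: finite_subset)

lemma maxk_up:
  assumes M: "maximal_kwise_intersecting n k F" and B: "B \<in> F" and BC: "B \<subseteq> C" and C: "C \<subseteq> {1..n}"
  shows "C \<in> F"
proof (rule ccontr)
  assume nC: "C \<notin> F"
  have K: "kwise_intersecting n k F" and FP: "F \<subseteq> Pow {1..n}"
    using M unfolding maximal_kwise_intersecting_def kwise_intersecting_def by auto
  have "kwise_intersecting n k (insert C F)"
    unfolding kwise_intersecting_def
  proof (intro conjI allI impI)
    show "insert C F \<subseteq> Pow {1..n}" using FP C by auto
  next
    fix G assume G: "G \<subseteq> insert C F" "G \<noteq> {}" "card G \<le> k"
    show "\<Inter> G \<noteq> {}"
    proof (cases "C \<in> G")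
      case False
      then have "G \<subseteq> F" using G by auto
      then show ?thesis using K G unfolding kwise_intersecting_def by auto
    next
      case True
      have finG: "finite G" using G FP C by (meson finite_Pow_iff finite_atLeastAtMost finite_insert finite_subset insert_subset)
      define G' where "G' = insert B (G - {C})"
      have "G' \<subseteq> F" using G B unfolding G'_def by auto
      moreover have "G' \<noteq> {}" unfolding G'_def by auto
      moreover have "card G' \<le> k"
      proof -
        have "card G' \<le> Suc (card (G - {C}))" unfolding G'_def using finG by (simp add: card_insert_le_m1)
        also have "\<dots> = card G" using True finG by (metis card_Suc_Diff1)
        finally show ?thesis using G by simp
      qed
      ultimately have "\<Inter> G' \<noteq> {}" using K unfolding kwise_intersecting_def by auto
      moreover have "\<Inter> G' \<subseteq> \<Inter> G" using True BC unfolding G'_def by auto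
      ultimately show ?thesis by auto
    qed
  qed
  then show False using M nC C unfolding maximal_kwise_intersecting_def by auto
qed

lemma maxk_top:
  assumes M: "maximal_kwise_intersecting n k F" and n: "n \<ge> 1"
  shows "{1..n} \<in> F"
proof (cases "F = {}")
  case True
  have "kwise_intersecting n k (insert {1..n} F)"
    unfolding kwise_intersecting_def True using n
    by (auto simp: subset_singleton_iff)
  then show ?thesis using M unfolding maximal_kwise_intersecting_def by auto
next
  case False
  then obtain B where "B \<in> F" by auto
  then show ?thesis using maxk_up[OF M] maxk_finite(2)[OF M] by blast
qed

lemma surj_from_lessThan:
  assumes "finite S" "S \<noteq> {}" "card S \<le> m"
  shows "\<exists>h. h ` {..<m} = S"
proof -
  obtain b where b: "bij_betw b {0..<card S} S" using ex_bij_betw_nat_finite[OF assms(1)] by blast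
  have cpos: "card S > 0" using assms by auto
  define h where "h i = (if i < card S then b i else b 0)" for i
  have "h ` {..<m} = S"
  proof
    show "h ` {..<m} \<subseteq> S" using b cpos unfolding h_def bij_betw_def by auto
    show "S \<subseteq> h ` {..<m}"
    proof
      fix x assume "x \<in> S"
      then obtain i where "i < card S" "b i = x" using b unfolding bij_betw_def by (metis atLeastLessThan_iff imageE)
      then show "x \<in> h ` {..<m}" using assms(3) unfolding h_def by (intro image_eqI[of _ _ i]) auto
    qed
  qed
  then show ?thesis by blast
qed

lemma maxk_nonmember:
  assumes M: "maximal_kwise_intersecting n k F" and n: "n \<ge> 1" and k: "k \<ge> 2"
    and A: "A \<subseteq> {1..n}" "A \<notin> F"
  shows "A \<in> (\<lambda>g. \<Union>i<k-1. {1..n} - g i) ` ({..<k-1} \<rightarrow>\<^sub>E F)"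
proof -
  have K: "kwise_intersecting n k F" and FP: "F \<subseteq> Pow {1..n}"
    using M unfolding maximal_kwise_intersecting_def kwise_intersecting_def by auto
  have "\<not> kwise_intersecting n k (insert A F)" using M A unfolding maximal_kwise_intersecting_def by auto
  then obtain G where G: "G \<subseteq> insert A F" "G \<noteq> {}" "card G \<le> k" "\<Inter>G = {}"
    using FP A unfolding kwise_intersecting_def by auto
  have finG: "finite G" using G FP A by (meson finite_Pow_iff finite_atLeastAtMost finite_insert finite_subset insert_subset)
  have AG: "A \<in> G"
  proof (rule ccontr)
    assume "A \<notin> G" then have "G \<subseteq> F" using G by auto
    then show False using K G unfolding kwise_intersecting_def by auto
  qed
  define G' where "G' = G - {A}"
  have G'F: "G' \<subseteq> F" using G unfolding G'_def by auto
  have cG': "card G' \<le> k - 1" using G AG finG unfolding G'_def by (simp add: card_Diff_singleton)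
  have AG': "A \<inter> \<Inter>G' = {}" using G(4) AG unfolding G'_def by (metis Inter_insert insert_Diff)
  have top: "{1..n} \<in> F" using maxk_top[OF M n] .
  show ?thesis
  proof (cases "G' = {}")
    case True
    then have "A = {}" using AG' by auto
    show ?thesis
      apply (rule image_eqI[of _ _ "\<lambda>i\<in>{..<k-1}. {1..n}"])
      using top \<open>A = {}\<close> by auto
  next
    case False
    have "finite G'" using finG unfolding G'_def by auto
    then obtain h where h: "h ` {..<k-1} = G'" using surj_from_lessThan[OF _ False cG'] by blast
    define g where "g = (\<lambda>i\<in>{..<k-1}. ({1..n} - A) \<union> h i)"
    have "g \<in> {..<k-1} \<rightarrow>\<^sub>E F"
    proof
      fix i assume i: "i \<in> {..<k-1}"
      have "h i \<in> F" "h i \<subseteq> {1..n}" using h i G'F FP by auto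
      then show "g i \<in> F" using maxk_up[OF M, of "h i"] i unfolding g_def by auto
    qed (auto simp: g_def)
    moreover have "A = (\<Union>i<k-1. {1..n} - g i)"
    proof
      show "A \<subseteq> (\<Union>i<k-1. {1..n} - g i)"
      proof
        fix x assume x: "x \<in> A"
        then have "x \<notin> \<Inter>G'" using AG' by auto
        then obtain i where "i < k-1" "x \<notin> h i" using h by auto
        then show "x \<in> (\<Union>i<k-1. {1..n} - g i)" using x A unfolding g_def by auto
      qed
      show "(\<Union>i<k-1. {1..n} - g i) \<subseteq> A" unfolding g_def by auto
    qed
    ultimately show ?thesis by blast
  qed
qed

lemma maxk_count:
  assumes M: "maximal_kwise_intersecting n k F" and n: "n \<ge> 1" and k: "k \<ge> 2"
  shows "2 ^ n \<le> card F + card F ^ (k - 1)"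
proof -
  have finF: "finite F" using maxk_finite[OF M] by simp
  let ?I = "(\<lambda>g. \<Union>i<k-1. {1..n} - g i) ` ({..<k-1} \<rightarrow>\<^sub>E F)"
  have "Pow {1..n} \<subseteq> F \<union> ?I"
  proof (rule subsetI)
    fix A assume A: "A \<in> Pow {1..n}"
    show "A \<in> F \<union> ?I"
    proof (cases "A \<in> F")
      case True then show ?thesis by (rule UnI1)
    next
      case False
      have "A \<subseteq> {1..n}" using A by simp
      have "A \<in> ?I" by (rule maxk_nonmember[OF M n k \<open>A \<subseteq> {1..n}\<close> False])
      then show ?thesis by simp
    qed
  qed
  then have "card (Pow {1..n}) \<le> card (F \<union> ?I)"
    by (intro card_mono) (auto intro: finite_PiE finF)
  also have "\<dots> \<le> card F + card ?I" by (rule card_Un_le)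
  also have "card ?I \<le> card ({..<k-1} \<rightarrow>\<^sub>E F)" by (rule card_image_le) (auto intro: finite_PiE finF)
  also have "card ({..<k-1} \<rightarrow>\<^sub>E F) = card F ^ (k - 1)" by (simp add: card_PiE)
  finally show ?thesis by (simp add: card_Pow)
qed


lemma con_kwise:
  fixes n t e k :: nat and S :: "nat set" and X :: "nat \<Rightarrow> nat set"
  assumes Xsub: "\<And>i. i < t \<Longrightarrow> X i \<subseteq> {1..n}"
    and Xcard: "\<And>i. i < t \<Longrightarrow> card (X i) \<ge> 2"
    and Xdisj: "\<And>i j. i < t \<Longrightarrow> j < t \<Longrightarrow> i \<noteq> j \<Longrightarrow> X i \<inter> X j = {}"
    and SU: "S \<subseteq> {1..n}" and Scard: "card S = e" and e: "e \<le> 1"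
    and SX: "\<And>i. i < t \<Longrightarrow> S \<inter> X i = {}"
    and Ucov: "{1..n} \<subseteq> S \<union> (\<Union>i<t. X i)"
    and k: "k + 1 = 2*t + e"
    and D: "D = {Y. \<exists>i<t. Y \<subset> X i} \<union> Pow S"
  shows "kwise_intersecting n k ((\<lambda>Y. {1..n} - Y) ` D)"
  unfolding kwise_intersecting_def
proof (intro conjI allI impI)
  let ?U = "{1..n::nat}"
  have DU: "D \<subseteq> Pow ?U" using Xsub SU unfolding D by auto
  show "(\<lambda>Y. ?U - Y) ` D \<subseteq> Pow ?U" by auto
  fix G assume G: "G \<subseteq> (\<lambda>Y. ?U - Y) ` D" "G \<noteq> {}" "card G \<le> k"
  show "\<Inter>G \<noteq> {}"
  proof
    assume IG: "\<Inter>G = {}"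
    define D' where "D' = {Y \<in> D. ?U - Y \<in> G}"
    have D'D: "D' \<subseteq> D" unfolding D'_def by auto
    have finD': "finite D'" using DU D'D by (meson finite_Pow_iff finite_atLeastAtMost finite_subset subset_trans)
    have GD': "G = (\<lambda>Y. ?U - Y) ` D'" using G(1) unfolding D'_def by auto
    have inj: "inj_on (\<lambda>Y. ?U - Y) D'"
      by (rule inj_onI) (use D'D DU in blast)
    have cD': "card D' \<le> k" using G(3) GD' card_image[OF inj] by simp
    have cov: "?U \<subseteq> \<Union>D'"
    proof
      fix x assume x: "x \<in> ?U"
      then have "x \<notin> \<Inter>G" using IG by auto
      then obtain g where "g \<in> G" "x \<notin> g" by auto
      then obtain Y where "Y \<in> D'" "g = ?U - Y" using GD' by auto
      then show "x \<in> \<Union>D'" using x \<open>x \<notin> g\<close> by auto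
    qed
    define P where "P i = {Y \<in> D'. Y \<inter> X i \<noteq> {}}" for i
    define PS where "PS = {Y \<in> D'. Y \<inter> S \<noteq> {}}"
    have Psub: "Y \<subset> X i" if "i < t" "Y \<in> P i" for i Y
    proof -
      have "Y \<in> D" "Y \<inter> X i \<noteq> {}" using that D'D unfolding P_def by auto
      then consider j where "j < t" "Y \<subset> X j" | "Y \<subseteq> S" unfolding D by auto
      then show ?thesis
      proof cases
        case (1 j)
        then show ?thesis using Xdisj[of i j] that \<open>Y \<inter> X i \<noteq> {}\<close> by (cases "i = j") auto
      next
        case 2
        then show ?thesis using SX[OF that(1)] \<open>Y \<inter> X i \<noteq> {}\<close> by auto
      qed
    qed
    have cP: "card (P i) \<ge> 2" if i: "i < t" for i
    proof (rule ccontr)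
      assume "\<not> card (P i) \<ge> 2"
      then have c1: "card (P i) \<le> Suc 0" by simp
      have finP: "finite (P i)" using finD' unfolding P_def by auto
      have XP: "X i \<subseteq> \<Union>(P i)"
      proof
        fix x assume "x \<in> X i"
        then have "x \<in> ?U" using Xsub[OF i] by auto
        then obtain Y where "Y \<in> D'" "x \<in> Y" using cov by auto
        then show "x \<in> \<Union>(P i)" using \<open>x \<in> X i\<close> unfolding P_def by auto
      qed
      show False
      proof (cases "P i = {}")
        case True
        then have "X i = {}" using XP by auto
        then show False using Xcard[OF i] by simp
      next
        case False
        then obtain Y where Y: "Y \<in> P i" by auto
        then have "P i = {Y}" using c1 finP Y card_le_Suc0_iff_eq[OF finP] by blast
        then have "X i \<subseteq> Y" using XP by auto
        then show False using Psub[OF i Y] by auto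
      qed
    qed
    have cPS: "card PS \<ge> e"
    proof (cases "e = 0")
      case False
      then have "S \<noteq> {}" using Scard by auto
      then obtain s where "s \<in> S" by auto
      then have "s \<in> ?U" using SU by auto
      then obtain Y where "Y \<in> D'" "s \<in> Y" using cov by auto
      then have "Y \<in> PS" using \<open>s \<in> S\<close> unfolding PS_def by auto
      moreover have "finite PS" using finD' unfolding PS_def by auto
      ultimately have "card PS \<ge> 1" by (metis One_nat_def Suc_leI card_gt_0_iff empty_iff)
      then show ?thesis using e by simp
    qed simp
    have finPi: "finite (P i)" for i using finD' unfolding P_def by auto
    have disjP: "P i \<inter> P j = {}" if "i \<in> {..<t}" "j \<in> {..<t}" "i \<noteq> j" for i j
    proof -
      { fix Y assume Y: "Y \<in> P i" "Y \<in> P j"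
        then have "Y \<subset> X i" using Psub that by auto
        moreover have "Y \<inter> X j \<noteq> {}" using Y unfolding P_def by auto
        ultimately have False using Xdisj[of i j] that by auto }
      then show ?thesis by auto
    qed
    have cU: "card (\<Union>i<t. P i) = (\<Sum>i<t. card (P i))"
      by (rule card_UN_disjoint) (use finPi disjP in auto)
    have disjS: "PS \<inter> (\<Union>i<t. P i) = {}"
    proof -
      { fix Y i assume Y: "Y \<in> PS" "i < t" "Y \<in> P i"
        then have "Y \<subset> X i" using Psub by auto
        moreover have "Y \<inter> S \<noteq> {}" using Y unfolding PS_def by auto
        ultimately have False using SX[OF Y(2)] by auto }
      then show ?thesis by auto
    qed
    have "card (PS \<union> (\<Union>i<t. P i)) = card PS + (\<Sum>i<t. card (P i))"
      using card_Un_disjoint[OF _ _ disjS] finD' cU finPi unfolding PS_def by auto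
    also have "\<dots> \<ge> e + 2 * t"
    proof -
      have "(\<Sum>i<t. card (P i)) \<ge> (\<Sum>i<t. 2)" by (rule sum_mono) (use cP in auto)
      then show ?thesis using cPS by simp
    qed
    finally have "card (PS \<union> (\<Union>i<t. P i)) \<ge> e + 2 * t" .
    moreover have "card (PS \<union> (\<Union>i<t. P i)) \<le> card D'"
      by (rule card_mono[OF finD']) (auto simp: PS_def P_def)
    ultimately show False using cD' k by simp
  qed
qed

lemma sum_le_2card:
  fixes b :: "nat \<Rightarrow> nat"
  assumes "finite I" "\<And>i. i \<in> I \<Longrightarrow> b i \<le> 2"
  shows "sum b I \<le> 2 * card I"
  using sum_bounded_above[of I b 2] assms by (simp add: mult.commute)

lemma con_max:
  fixes n t e k :: nat and S :: "nat set" and X :: "nat \<Rightarrow> nat set"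
  assumes Xsub: "\<And>i. i < t \<Longrightarrow> X i \<subseteq> {1..n}"
    and Xcard: "\<And>i. i < t \<Longrightarrow> card (X i) \<ge> 2"
    and Xdisj: "\<And>i j. i < t \<Longrightarrow> j < t \<Longrightarrow> i \<noteq> j \<Longrightarrow> X i \<inter> X j = {}"
    and SU: "S \<subseteq> {1..n}" and Scard: "card S = e" and e: "e \<le> 1"
    and SX: "\<And>i. i < t \<Longrightarrow> S \<inter> X i = {}"
    and Ucov: "{1..n} \<subseteq> S \<union> (\<Union>i<t. X i)"
    and k: "k + 1 = 2*t + e"
    and D: "D = {Y. \<exists>i<t. Y \<subset> X i} \<union> Pow S" and kpos: "k \<ge> 1"
  shows "maximal_kwise_intersecting n k ((\<lambda>Y. {1..n} - Y) ` D)"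
  unfolding maximal_kwise_intersecting_def
proof (intro conjI allI impI)
  let ?U = "{1..n::nat}"
  let ?F = "(\<lambda>Y. ?U - Y) ` D"
  show KF: "kwise_intersecting n k ?F" by (rule con_kwise[OF Xsub Xcard Xdisj SU Scard e SX Ucov k D])
  have DU: "D \<subseteq> Pow ?U" using Xsub SU unfolding D by auto
  fix A assume A: "A \<subseteq> ?U" "A \<notin> ?F"
  define Z where "Z = ?U - A"
  have AZ: "A = ?U - Z" using A unfolding Z_def by auto
  have ZD: "Z \<notin> D" using A AZ by auto
  have ZS: "\<not> Z \<subseteq> S" using ZD unfolding D by auto
  have ZX: "\<not> Z \<subset> X i" if "i < t" for i using ZD that unfolding D by auto
  have Xne: "X i \<noteq> {}" if "i < t" for i using Xcard[OF that] by (metis card.empty not_numeral_le_zero)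
  have finX: "finite (X i)" if "i < t" for i using Xsub[OF that] by (meson finite_atLeastAtMost finite_subset)
  define a where "a i = (SOME x. x \<in> X i)" for i
  have aX: "a i \<in> X i" if "i < t" for i unfolding a_def by (rule someI_ex) (use Xne[OF that] in blast)
  have aprop: "{a i} \<subset> X i" if "i < t" for i
  proof -
    have "{a i} \<noteq> X i" using Xcard[OF that] by (metis One_nat_def card.empty card_insert_disjoint empty_iff finite.emptyI numeral_le_one_iff semiring_norm(69))
    then show ?thesis using aX[OF that] by auto
  qed
  define B where "B i = (if X i \<inter> Z = {} then {X i - {a i}, {a i}} else {X i - Z})" for i
  define C where "C = ((\<Union>i<t. B i) \<union> {S - Z}) - {{}}"
  have CD: "C \<subseteq> D"
  proof
    fix Y assume "Y \<in> C"
    then consider i where "i < t" "Y \<in> B i" | "Y = S - Z" unfolding C_def by auto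
    then show "Y \<in> D"
    proof cases
      case (1 i)
      then show ?thesis using aX[OF 1(1)] aprop[OF 1(1)] unfolding B_def D
        by (cases "X i \<inter> Z = {}") auto
    qed (auto simp: D)
  qed
  have finC: "finite C" using CD DU by (meson finite_Pow_iff finite_atLeastAtMost finite_subset subset_trans)
  have AC: "A \<subseteq> \<Union>C"
  proof
    fix x assume x: "x \<in> A"
    then have xU: "x \<in> ?U" and xZ: "x \<notin> Z" using A AZ by auto
    then consider "x \<in> S" | i where "i < t" "x \<in> X i" using Ucov by auto
    then show "x \<in> \<Union>C"
    proof cases
      case 1
      then have "S - Z \<in> C" using xZ unfolding C_def by auto
      then show ?thesis using 1 xZ by auto
    next
      case (2 i)
      show ?thesis
      proof (cases "X i \<inter> Z = {}")
        case True
        have ne: "X i - {a i} \<noteq> {}" using aprop[OF 2(1)] by auto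
        have m1: "X i - {a i} \<in> C" using True 2 ne unfolding C_def B_def by auto
        have m2: "{a i} \<in> C" using True 2 unfolding C_def B_def by auto
        have "x \<in> {a i} \<or> x \<in> X i - {a i}" using 2 by auto
        then show ?thesis using m1 m2 by blast
      next
        case False
        then have "X i - Z \<in> C" using 2 xZ unfolding C_def B_def by auto
        then show ?thesis using 2 xZ by auto
      qed
    qed
  qed
  have cardC: "card C \<le> k - 1"
  proof -
    define b where "b i = card (B i - {{}})" for i
    define s where "s = card ({S - Z} - {{}})"
    have finB: "finite (B i - {{}})" for i unfolding B_def by auto
    have C_eq: "C = (\<Union>i<t. B i - {{}}) \<union> ({S - Z} - {{}})" unfolding C_def by auto
    have "card C \<le> card (\<Union>i<t. B i - {{}}) + s"
      unfolding C_eq s_def by (rule card_Un_le)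
    also have "card (\<Union>i<t. B i - {{}}) \<le> (\<Sum>i<t. b i)"
      unfolding b_def by (rule card_UN_le) simp
    finally have c1: "card C \<le> (\<Sum>i<t. b i) + s" by simp
    have b2: "b i \<le> 2" for i
    proof -
      have "card (B i) \<le> 2" unfolding B_def by (auto simp: card_insert_if)
      moreover have "card (B i - {{}}) \<le> card (B i)" by (rule card_mono) (auto simp: B_def)
      ultimately show ?thesis unfolding b_def by simp
    qed
    have b1: "b i \<le> 1" if "X i \<inter> Z \<noteq> {}" for i
    proof -
      have "B i - {{}} \<subseteq> {X i - Z}" using that unfolding B_def by auto
      then have "card (B i - {{}}) \<le> card {X i - Z}" by (intro card_mono) auto
      then show ?thesis unfolding b_def by simp
    qed
    have b0: "b i = 0" if "i < t" "X i \<subseteq> Z" for i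
    proof -
      have "X i \<inter> Z \<noteq> {}" using that Xne[OF that(1)] by auto
      then have "B i - {{}} = {}" using that unfolding B_def by auto
      then show ?thesis unfolding b_def by (metis card.empty)
    qed
    have finS: "finite S" using SU by (meson finite_atLeastAtMost finite_subset)
    have s_e: "s \<le> e"
    proof (cases "S - Z = {}")
      case True then show ?thesis unfolding s_def by simp
    next
      case False
      then have "S \<noteq> {}" by auto
      then have "card S > 0" using finS by (simp add: card_gt_0_iff)
      then have "e \<ge> 1" using Scard by simp
      moreover have "s \<le> 1" unfolding s_def by (simp add: card_Diff_singleton_if)
      ultimately show ?thesis by simp
    qed
    have s0: "s = 0" if "S \<inter> Z \<noteq> {}"
    proof -
      have "card S \<le> Suc 0" using Scard e by simp
      then have "\<forall>x\<in>S. \<forall>y\<in>S. x = y" using card_le_Suc0_iff_eq[OF finS] by simp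
      then have "S \<subseteq> Z" using that by (auto simp: disjoint_iff)
      then show ?thesis unfolding s_def by simp
    qed
    have ZU: "Z \<subseteq> ?U" unfolding Z_def by auto
    obtain z where "z \<in> Z" "z \<notin> S" using ZS by auto
    then obtain i0 where i0: "i0 < t" "z \<in> X i0" using ZU Ucov by blast
    then have i0Z: "X i0 \<inter> Z \<noteq> {}" using \<open>z \<in> Z\<close> by auto
    have t1: "t \<ge> 1" using i0 by simp
    have rem1: "(\<Sum>i<t. b i) = b i0 + (\<Sum>i\<in>{..<t} - {i0}. b i)"
      using sum.remove[of "{..<t}" i0 b] i0 by simp
    have r1: "(\<Sum>i\<in>{..<t} - {i0}. b i) \<le> 2 * (t - 1)"
      using sum_le_2card[of "{..<t} - {i0}" b] b2 i0 by simp
    show ?thesis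
    proof (cases "\<exists>i1<t. i1 \<noteq> i0 \<and> X i1 \<inter> Z \<noteq> {}")
      case True
      then obtain i1 where i1: "i1 < t" "i1 \<noteq> i0" "X i1 \<inter> Z \<noteq> {}" by blast
      have rem2: "(\<Sum>i\<in>{..<t} - {i0}. b i) = b i1 + (\<Sum>i\<in>{..<t} - {i0} - {i1}. b i)"
        using sum.remove[of "{..<t} - {i0}" i1 b] i1 by simp
      have "card ({..<t} - {i0} - {i1}) = t - 2" using i0 i1 by (simp add: card_Diff_singleton_if)
      then have r2: "(\<Sum>i\<in>{..<t} - {i0} - {i1}. b i) \<le> 2 * (t - 2)"
        using sum_le_2card[of "{..<t} - {i0} - {i1}" b] b2 by simp
      have "t \<ge> 2" using i0 i1 by simp
      then show ?thesis using c1 rem1 rem2 r2 b1[OF i0Z] b1[OF i1(3)] s_e k by simp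
    next
      case False
      then have Zsub: "Z \<subseteq> X i0 \<union> S" using ZU Ucov by blast
      show ?thesis
      proof (cases "S \<inter> Z = {}")
        case True
        then have "Z \<subseteq> X i0" using Zsub by auto
        then have "Z = X i0" using ZX[OF i0(1)] by auto
        then have "b i0 = 0" using b0[OF i0(1)] by simp
        then show ?thesis using c1 rem1 r1 s_e k t1 by simp
      next
        case False
        then have "s = 0" using s0 by simp
        moreover have "e \<ge> 1"
        proof -
          have "S \<noteq> {}" using False by auto
          then have "card S > 0" using finS by (simp add: card_gt_0_iff)
          then show ?thesis using Scard by simp
        qed
        ultimately show ?thesis using c1 rem1 r1 b1[OF i0Z] k t1 by simp
      qed
    qed
  qed
  define G where "G = insert A ((\<lambda>Y. ?U - Y) ` C)"
  have "G \<subseteq> insert A ?F" using CD unfolding G_def by auto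
  moreover have "G \<noteq> {}" unfolding G_def by auto
  moreover have "card G \<le> k"
  proof -
    have "card G \<le> Suc (card ((\<lambda>Y. ?U - Y) ` C))" unfolding G_def using finC by (simp add: card_insert_le_m1)
    also have "\<dots> \<le> Suc (card C)" using card_image_le[OF finC] by simp
    finally show ?thesis using cardC kpos by simp
  qed
  moreover have "\<Inter>G = {}"
  proof -
    { fix x assume x: "x \<in> \<Inter>G"
      then have "x \<in> A" unfolding G_def by blast
      have "x \<notin> Y" if "Y \<in> C" for Y
      proof -
        have "?U - Y \<in> G" using that unfolding G_def by blast
        then show ?thesis using x by blast
      qed
      note \<open>x \<in> A\<close> this
      then have False using AC by auto }
    then show ?thesis by auto
  qed
  ultimately show "\<not> kwise_intersecting n k (insert A ?F)"
    unfolding kwise_intersecting_def by blast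
qed


lemma star_max:
  assumes n: "n \<ge> 1" and k: "k \<ge> 2"
  shows "maximal_kwise_intersecting n k {A. A \<subseteq> {1..n} \<and> 1 \<in> A}"
  unfolding maximal_kwise_intersecting_def
proof (intro conjI allI impI)
  show K: "kwise_intersecting n k {A. A \<subseteq> {1..n} \<and> 1 \<in> A}"
    unfolding kwise_intersecting_def by auto
  fix A assume A: "A \<subseteq> {1..n}" "A \<notin> {A. A \<subseteq> {1..n} \<and> 1 \<in> A}"
  then have "1 \<notin> A" by auto
  let ?G = "{A, {1}}"
  have "?G \<subseteq> insert A {A. A \<subseteq> {1..n} \<and> 1 \<in> A}" using n by auto
  moreover have "card ?G \<le> k" using k by (simp add: card_insert_if)
  moreover have "\<Inter>?G = {}" using \<open>1 \<notin> A\<close> by auto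
  ultimately show "\<not> kwise_intersecting n k (insert A {A. A \<subseteq> {1..n} \<and> 1 \<in> A})"
    unfolding kwise_intersecting_def by blast
qed

lemma f_le: assumes "maximal_kwise_intersecting n k F" shows "f n k \<le> card F"
  unfolding f_def by (rule cInf_lower) (use assms in auto)

lemma f_mem: assumes n: "n \<ge> 1" and k: "k \<ge> 2"
  shows "\<exists>F. maximal_kwise_intersecting n k F \<and> f n k = card F"
proof -
  have "{card F | F. maximal_kwise_intersecting n k F} \<noteq> {}" using star_max[OF n k] by blast
  from Inf_nat_def1[OF this] show ?thesis unfolding f_def by auto
qed

lemma f_small: assumes n: "n \<ge> 1" and k: "k \<ge> 2" shows "f n k \<le> 2 ^ n"
proof -
  have "f n k \<le> card {A. A \<subseteq> {1..n} \<and> 1 \<in> A}" by (rule f_le[OF star_max[OF n k]])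
  also have "\<dots> \<le> card (Pow {1..n})" by (rule card_mono) auto
  finally show ?thesis by (simp add: card_Pow)
qed

lemma f_lower:
  assumes n: "n \<ge> 1" and k: "k \<ge> 2"
  shows "1/2 * 2 powr (real n / (real k - 1)) \<le> real (f n k)"
proof -
  obtain F where M: "maximal_kwise_intersecting n k F" and fF: "f n k = card F"
    using f_mem[OF n k] by blast
  define m where "m = card F"
  have cnt: "2 ^ n \<le> m + m ^ (k - 1)" using maxk_count[OF M n k] unfolding m_def .
  have "F \<noteq> {}" using maxk_top[OF M n] by auto
  then have "card F > 0" using maxk_finite(1)[OF M] by (simp add: card_gt_0_iff)
  then have m1: "m \<ge> 1" unfolding m_def by simp
  have "m \<le> m ^ (k - 1)" by (rule self_le_power[OF m1]) (use k in simp)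
  then have "2 ^ n \<le> 2 * m ^ (k - 1)" using cnt by simp
  then have "real (2 ^ n) \<le> real (2 * m ^ (k - 1))" by (simp only: of_nat_le_iff)
  then have c2: "(2::real) ^ n \<le> 2 * real m ^ (k - 1)" by simp
  define K where "K = k - 2"
  have K: "k - 1 = Suc K" using k unfolding K_def by simp
  have rk: "real k - 1 = real (Suc K)" using K k by simp
  define x where "x = 1/2 * 2 powr (real n / real (Suc K))"
  have "x ^ Suc K = (1/2) ^ Suc K * (2 powr (real n / real (Suc K))) ^ Suc K"
    unfolding x_def by (rule power_mult_distrib)
  also have "(2 powr (real n / real (Suc K))) ^ Suc K = (2::real) ^ n"
  proof -
    have "(2 powr (real n / real (Suc K))) ^ Suc K = (2::real) powr (real (Suc K) * (real n / real (Suc K)))"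
      by (rule powr_power) simp
    also have "real (Suc K) * (real n / real (Suc K)) = real n" by (simp del: of_nat_Suc)
    also have "(2::real) powr real n = 2 ^ n" by (rule powr_realpow) simp
    finally show ?thesis .
  qed
  also have "(1/2::real) ^ Suc K \<le> 1/2" by (simp add: power_le_one)
  then have "(1/2::real) ^ Suc K * 2 ^ n \<le> 1/2 * 2 ^ n" by (simp add: mult_right_mono)
  also have "\<dots> \<le> real m ^ Suc K" using c2 K by simp
  finally have "x ^ Suc K \<le> real m ^ Suc K" .
  then have "x \<le> real m" by (rule power_le_imp_le_base) simp
  then show ?thesis unfolding x_def rk fF m_def .
qed


lemma upper_constr:
  fixes k n :: nat
  assumes k: "k \<ge> 4" and n: "n \<ge> k + 1"
  shows "\<exists>F. maximal_kwise_intersecting n k F \<and>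
     card F \<le> ((k+1) div 2) * 2 ^ (((k+1) div 2) + (n - (if even k then 1 else 0)) div ((k+1) div 2)) + 2"
proof -
  define t where "t = (k+1) div 2"
  define e where "e = (if even k then 1 else (0::nat))"
  define N where "N = n - e"
  define m where "m = N div t"
  have ke: "k + 1 = 2*t + e" unfolding t_def e_def by (cases "even k") (auto elim!: evenE oddE)
  have e1: "e \<le> 1" unfolding e_def by simp
  have t2: "t \<ge> 2" using k ke e1 by linarith
  have N2: "N \<ge> 2 * t" using n ke unfolding N_def by linarith
  have m2: "m \<ge> 2"
  proof -
    have "(2 * t) div t \<le> N div t" by (rule div_le_mono[OF N2])
    then show ?thesis using t2 unfolding m_def by simp
  qed
  have tm: "t * m \<le> N" unfolding m_def by simp
  have Nlt: "N < t + m * t" unfolding m_def by (rule dividend_less_div_times) (use t2 in simp)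
  define blk where "blk x = min ((x - 1) div m) (t - 1)" for x
  define X where "X i = {x \<in> {1..N}. blk x = i}" for i
  define S where "S = (if even k then {n} else {})"
  define D where "D = {Y. \<exists>i<t. Y \<subset> X i} \<union> Pow S"
  have finX: "finite (X i)" for i unfolding X_def by auto
  have Xsub: "X i \<subseteq> {1..n}" for i unfolding X_def N_def by auto
  have inner: "{i*m+1..i*m+m} \<subseteq> X i" if i: "i < t" for i
  proof
    fix x assume x: "x \<in> {i*m+1..i*m+m}"
    have "(i+1) * m \<le> t * m" using i by (intro mult_right_mono) auto
    then have xN: "x \<le> N" using x tm by (simp add: algebra_simps)
    have "(x - 1) div m = i" by (rule div_nat_eqI) (use x in \<open>auto simp: algebra_simps\<close>)
    then have "blk x = i" unfolding blk_def using i by simp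
    then show "x \<in> X i" unfolding X_def using x xN by simp
  qed
  have Xcard: "card (X i) \<ge> 2" if "i < t" for i
  proof -
    have "card {i*m+1..i*m+m} \<le> card (X i)" by (rule card_mono[OF finX inner[OF that]])
    then show ?thesis using m2 by simp
  qed
  have Xdisj: "X i \<inter> X j = {}" if "i \<noteq> j" for i j using that unfolding X_def by auto
  have SU: "S \<subseteq> {1..n}" unfolding S_def using n by auto
  have Scard: "card S = e" unfolding S_def e_def by simp
  have SX: "S \<inter> X i = {}" for i unfolding S_def X_def N_def e_def by auto
  have Ucov: "{1..n} \<subseteq> S \<union> (\<Union>i<t. X i)"
  proof
    fix x assume x: "x \<in> {1..n}"
    show "x \<in> S \<union> (\<Union>i<t. X i)"
    proof (cases "x \<le> N")
      case True
      have "blk x < t" unfolding blk_def using t2 by simp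
      then have "x \<in> X (blk x)" "blk x < t" unfolding X_def using True x by auto
      then show ?thesis by blast
    next
      case False
      then have "even k" "x = n" using x unfolding N_def e_def by (auto split: if_splits)
      then show ?thesis unfolding S_def by simp
    qed
  qed
  have M: "maximal_kwise_intersecting n k ((\<lambda>Y. {1..n} - Y) ` D)"
    by (rule con_max[OF Xsub Xcard Xdisj SU Scard e1 SX Ucov ke D_def]) (use k in auto)
  have cX: "card (X i) \<le> m + t" if i: "i < t" for i
  proof -
    have "X i \<subseteq> {i*m+1..i*m+m} \<union> {t*m+1..N}"
    proof
      fix x assume x: "x \<in> X i"
      show "x \<in> {i*m+1..i*m+m} \<union> {t*m+1..N}"
      proof (cases "x \<le> t * m")
        case False then show ?thesis using x unfolding X_def by auto
      next
        case True
        have x1: "x \<ge> 1" using x unfolding X_def by auto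
        have "(x - 1) div m < t" by (rule less_mult_imp_div_less) (use True x1 in \<open>auto simp: mult.commute\<close>)
        then have bi: "(x - 1) div m = i" using x unfolding X_def blk_def by auto
        define y where "y = x - 1"
        have xy: "x = y + 1" using x1 unfolding y_def by simp
        have a1: "i * m \<le> y" unfolding y_def bi[symmetric] by (simp add: mult.commute)
        have a2: "y < m + i * m" unfolding y_def bi[symmetric] by (rule dividend_less_div_times) (use m2 in simp)
        have "i*m+1 \<le> x" "x \<le> i*m+m" using a1 a2 xy by linarith+
        then show ?thesis by simp
      qed
    qed
    then have "card (X i) \<le> card ({i*m+1..i*m+m} \<union> {t*m+1..N})" by (rule card_mono[rotated]) auto
    also have "\<dots> \<le> card {i*m+1..i*m+m} + card {t*m+1..N}" by (rule card_Un_le)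
    also have "\<dots> \<le> m + t" using Nlt by (simp add: algebra_simps)
    finally show ?thesis .
  qed
  have Dsub: "D \<subseteq> (\<Union>i<t. Pow (X i)) \<union> Pow S" unfolding D_def by auto
  have "finite D" by (rule finite_subset[OF Dsub]) (auto simp: finX S_def)
  then have "card ((\<lambda>Y. {1..n} - Y) ` D) \<le> card D" by (rule card_image_le)
  also from Dsub have "card D \<le> card ((\<Union>i<t. Pow (X i)) \<union> Pow S)" by (rule card_mono[rotated]) (auto simp: finX S_def)
  also have "\<dots> \<le> card (\<Union>i<t. Pow (X i)) + card (Pow S)" by (rule card_Un_le)
  also have "card (\<Union>i<t. Pow (X i)) \<le> (\<Sum>i<t. card (Pow (X i)))" by (rule card_UN_le) simp
  also have "(\<Sum>i<t. card (Pow (X i))) \<le> (\<Sum>i<t. 2 ^ (m + t))"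
  proof (rule sum_mono)
    fix i assume "i \<in> {..<t}"
    then have "card (X i) \<le> m + t" using cX by simp
    then show "card (Pow (X i)) \<le> 2 ^ (m + t)" using finX by (simp add: card_Pow power_increasing)
  qed
  also have "card (Pow S) \<le> 2" unfolding S_def by (simp add: card_Pow)
  finally have "card ((\<lambda>Y. {1..n} - Y) ` D) \<le> t * 2 ^ (t + m) + 2" by (simp add: add.commute)
  then show ?thesis using M unfolding t_def m_def N_def e_def by blast
qed


theorem proposition4p1:
  fixes k :: nat
  assumes "k \<ge> 4"
  shows "\<exists>c d :: real. c > 0 \<and> d > 0 \<and>
           (\<forall>n::nat. n \<ge> 1 \<longrightarrow>
              c * 2 powr (real n / (real k - 1)) \<le> real (f n k) \<and>
              real (f n k) \<le> d * 2 powr (real n / real_of_int \<lceil>real k / 2\<rceil>))"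
proof -
  define t where "t = (k+1) div 2"
  define d :: real where "d = real t * 2 ^ t + 2 + 2 ^ k"
  have k2: "k \<ge> 2" using assms by simp
  have t1: "t \<ge> 1" using assms unfolding t_def by simp
  have ceil: "real_of_int \<lceil>real k / 2\<rceil> = real t"
  proof -
    have "\<lceil>real k / 2\<rceil> = int t"
    proof (cases "even k")
      case True
      then obtain j where j: "k = 2 * j" by (auto elim: evenE)
      then have "t = j" unfolding t_def by simp
      then show ?thesis using j by simp
    next
      case False
      then obtain j where j: "k = 2 * j + 1" by (auto elim: oddE)
      then have tj: "t = j + 1" unfolding t_def by simp
      show ?thesis unfolding ceiling_eq_iff using j tj by simp
    qed
    then show ?thesis by simp
  qed
  have dpos: "d > 0" unfolding d_def by (intro add_pos_pos add_nonneg_pos) auto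
  have main: "real (f n k) \<le> d * 2 powr (real n / real t)" if n: "n \<ge> 1" for n
  proof -
    have pg1: "(1::real) \<le> 2 powr (real n / real t)" by (rule ge_one_powr_ge_zero) auto
    show ?thesis
    proof (cases "n \<ge> k + 1")
      case True
      define e where "e = (if even k then 1 else (0::nat))"
      define m where "m = (n - e) div t"
      obtain F where M: "maximal_kwise_intersecting n k F"
        and cF: "card F \<le> t * 2 ^ (t + m) + 2"
        using upper_constr[OF assms True] unfolding t_def[symmetric] e_def[symmetric] m_def[symmetric] by blast
      have "f n k \<le> t * 2 ^ (t + m) + 2" using f_le[OF M] cF by simp
      then have "real (f n k) \<le> real t * 2 ^ t * 2 ^ m + 2"
        by (metis (mono_tags, lifting) of_nat_add of_nat_le_iff of_nat_mult of_nat_numeral of_nat_power power_add mult.assoc)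
      also have "\<dots> \<le> (real t * 2 ^ t + 2) * 2 ^ m"
      proof -
        have "(1::real) \<le> 2 ^ m" by simp
        then show ?thesis by (simp add: algebra_simps)
      qed
      also have "(2::real) ^ m \<le> 2 powr (real n / real t)"
      proof -
        have "m * t \<le> n - e" unfolding m_def by simp
        then have "real m * real t \<le> real n" by (metis diff_le_self le_trans of_nat_le_iff of_nat_mult)
        then have "real m \<le> real n / real t" using t1 by (simp add: field_simps)
        then have "(2::real) powr real m \<le> 2 powr (real n / real t)" by (rule powr_mono) simp
        then show ?thesis by (simp add: powr_realpow)
      qed
      then have "(real t * 2 ^ t + 2) * (2::real) ^ m \<le> (real t * 2 ^ t + 2) * 2 powr (real n / real t)"
        by (intro mult_left_mono) auto
      also have "\<dots> \<le> d * 2 powr (real n / real t)" unfolding d_def by (intro mult_right_mono) auto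
      finally show ?thesis .
    next
      case False
      have "f n k \<le> 2 ^ n" by (rule f_small[OF n k2])
      also have "(2::nat) ^ n \<le> 2 ^ k" using False by (intro power_increasing) auto
      finally have "real (f n k) \<le> 2 ^ k" by (metis of_nat_le_iff of_nat_numeral of_nat_power)
      also have "\<dots> \<le> d" unfolding d_def by simp
      also have "\<dots> \<le> d * 2 powr (real n / real t)" using pg1 dpos by simp
      finally show ?thesis .
    qed
  qed
  show ?thesis
    apply (rule exI[of _ "1/2"], rule exI[of _ d])
    using f_lower[OF _ k2] main dpos unfolding ceil by auto
qed

end
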